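(* Let $A,B\in\mathcal{B}(\mathcal{H})$. Then (i) $w(AB\pm BA)\leq w^{1/2}(A^*A+AA^* )\,w^{1/2}(B^*B+BB^* )$; (ii) $w(AB\pm BA)\leq w^{1/2}(A^*A+B^*B)\,w^{1/2}(AA^*+BB^* )$.
   Context: $\mathcal{H}$ is a complex Hilbert space, $\mathcal{B}(\mathcal{H})$ the bounded linear operators on it, and $w(T)=\sup\{|\langle Tx,x\rangle|:\|x\|=1\}$ the numerical radius. *)

theory Defs
  imports "HOL-Analysis.Analysis"
begin

text \<open>The distribution
  only provides real inner product spaces, so we add complex scalar
  multiplication and a complex inner product on top of a real normed vector space.\<close>

class complex_inner_space = real_normed_vector +
  fixes scaleC :: "complex \<Rightarrow> 'a \<Rightarrow> 'a"
    and cinner :: "'a \<Rightarrow> 'a \<Rightarrow> complex"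
  assumes scaleC_add_right: "scaleC a (x + y) = scaleC a x + scaleC a y"
    and scaleC_add_left: "scaleC (a + b) x = scaleC a x + scaleC b x"
    and scaleC_scaleC: "scaleC a (scaleC b x) = scaleC (a * b) x"
    and scaleC_one: "scaleC 1 x = x"
    and scaleR_scaleC: "scaleR r x = scaleC (complex_of_real r) x"
    and cinner_commute: "cinner x y = cnj (cinner y x)"
    and cinner_add_left: "cinner (x + y) z = cinner x z + cinner y z"
    and cinner_scaleC_left: "cinner (scaleC a x) y = a * cinner x y"
    and cinner_self_real: "Im (cinner x x) = 0"
    and cinner_self_nonneg: "0 \<le> Re (cinner x x)"
    and cinner_self_eq_0: "cinner x x = 0 \<longleftrightarrow> x = 0"
    and norm_eq_sqrt_cinner: "norm x = sqrt (Re (cinner x x))"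

class chilbert_space = complex_inner_space + complete_space

definition bounded_clinear :: "('a::complex_inner_space \<Rightarrow> 'a) \<Rightarrow> bool" where
  "bounded_clinear T \<longleftrightarrow> bounded_linear T \<and> (\<forall>c x. T (scaleC c x) = scaleC c (T x))"

definition is_adjoint :: "('a::complex_inner_space \<Rightarrow> 'a) \<Rightarrow> ('a \<Rightarrow> 'a) \<Rightarrow> bool" where
  "is_adjoint T S \<longleftrightarrow> (\<forall>x y. cinner (T x) y = cinner x (S y))"

definition numrad :: "('a::complex_inner_space \<Rightarrow> 'a) \<Rightarrow> real" where
  "numrad T = Sup {cmod (cinner (T x) x) | x. norm x = 1}"

end

theory Submission imports Defs begin
lemma cinner_add_right: "cinner x (y + z) = cinner x y + cinner x z" for x :: "'a::complex_inner_space"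
  by (metis cinner_commute cinner_add_left complex_cnj_add)
lemma cinner_scaleC_right: "cinner x (scaleC a y) = cnj a * cinner x y" for x :: "'a::complex_inner_space"
  by (metis cinner_commute cinner_scaleC_left complex_cnj_mult complex_cnj_cnj)
lemma cinner_zero_left[simp]: "cinner 0 y = 0" for y :: "'a::complex_inner_space"
proof -
  have "cinner (0+0) y = cinner 0 y + cinner 0 y" by (rule cinner_add_left)
  thus ?thesis by simp
qed
lemma cinner_zero_right[simp]: "cinner y 0 = 0" for y :: "'a::complex_inner_space"
  by (metis cinner_commute cinner_zero_left complex_cnj_zero)
lemma cinner_minus_left: "cinner (-x) y = - cinner x y" for x :: "'a::complex_inner_space"
proof -
  have "cinner (x + -x) y = cinner x y + cinner (-x) y" by (rule cinner_add_left)
  thus ?thesis by (simp add: eq_neg_iff_add_eq_0 add.commute)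
qed
lemma cinner_diff_left: "cinner (x - z) y = cinner x y - cinner z y" for x :: "'a::complex_inner_space"
  unfolding diff_conv_add_uminus cinner_add_left cinner_minus_left by simp
lemma cinner_diff_right: "cinner y (x - z) = cinner y x - cinner y z" for x :: "'a::complex_inner_space"
  by (metis cinner_commute cinner_diff_left complex_cnj_diff)
lemma cinner_self_norm: "cinner x x = complex_of_real ((norm x)^2)" for x :: "'a::complex_inner_space"
  using cinner_self_nonneg[of x] cinner_self_real[of x]
  by (simp add: norm_eq_sqrt_cinner complex_eq_iff)
lemma cs: "cmod (cinner x y) \<le> norm x * norm y" for x :: "'a::complex_inner_space"
proof (cases "y = 0")
  case True then show ?thesis by simp
next
  case False
  define n where "n = (norm y)^2"
  define c where "c = cinner x y"
  define t where "t = c / complex_of_real n"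
  have n: "n > 0" using False by (simp add: n_def)
  have yx: "cinner y x = cnj c" by (simp add: c_def cinner_commute[of y x])
  have "0 \<le> Re (cinner (x - scaleC t y) (x - scaleC t y))" by (rule cinner_self_nonneg)
  also have "cinner (x - scaleC t y) (x - scaleC t y) = 
     complex_of_real (norm x^2) - cnj t * c - t * cnj c + t * cnj t * complex_of_real n"
    unfolding cinner_diff_left cinner_diff_right cinner_scaleC_left cinner_scaleC_right
    by (simp add: cinner_self_norm yx flip: c_def n_def) (simp add: algebra_simps)
  also have "\<dots> = complex_of_real (norm x^2 - (cmod c)^2 / n)"
    using n unfolding t_def
    by (simp add: field_simps complex_mult_cnj cmod_power2 flip: of_real_mult of_real_power)
  finally have "(cmod c)^2 / n \<le> norm x ^2" by simp
  hence "(cmod c)^2 \<le> (norm x * norm y)^2" using n by (simp add: n_def field_simps power_mult_distrib)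
  thus ?thesis unfolding c_def by (rule power2_le_imp_le) simp
qed

lemma adj_bound:
  fixes A As :: "'a::complex_inner_space \<Rightarrow> 'a"
  assumes "bounded_linear A" and adj: "\<And>u v. cinner (A u) v = cinner u (As v)"
  shows "\<exists>K. \<forall>x. norm (A x) \<le> norm x * K \<and> norm (As x) \<le> norm x * K"
proof -
  obtain K where K: "K > 0" "\<And>x. norm (A x) \<le> norm x * K"
    using bounded_linear.pos_bounded[OF assms(1)] by blast
  have "norm (As x) \<le> norm x * K" for x
  proof (cases "norm (As x) = 0")
    case True then show ?thesis using K by simp
  next
    case False
    have "(norm (As x))^2 = Re (cinner (As x) (As x))" by (simp add: cinner_self_norm)
    also have "\<dots> = Re (cinner (A (As x)) x)" by (simp add: adj)
    also have "\<dots> \<le> cmod (cinner (A (As x)) x)" by (rule complex_Re_le_cmod)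
    also have "\<dots> \<le> norm (A (As x)) * norm x" by (rule cs)
    also have "\<dots> \<le> norm (As x) * K * norm x" using K(2)[of "As x"] by (simp add: mult_right_mono)
    finally have "norm (As x) * norm (As x) \<le> norm (As x) * (norm x * K)"
      by (simp add: power2_eq_square algebra_simps)
    thus ?thesis using False by simp
  qed
  thus ?thesis using K by blast
qed

lemma numrad_upper:
  assumes "\<forall>x. norm x = 1 \<longrightarrow> cmod (cinner (T x) x) \<le> M" "norm x = 1"
  shows "cmod (cinner (T x) x) \<le> numrad T"
  unfolding numrad_def
  by (rule cSup_upper) (use assms in \<open>auto simp: bdd_above_def\<close>)

lemma numrad_least:
  fixes T :: "'a::complex_inner_space \<Rightarrow> 'a"
  assumes "\<forall>x. norm x = 1 \<longrightarrow> cmod (cinner (T x) x) \<le> M" "\<exists>x::'a. norm x = 1"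
  shows "numrad T \<le> M"
  unfolding numrad_def
  by (rule cSup_least) (use assms in auto)

lemma cs2:
  fixes a b c d :: real
  shows "a*c + b*d \<le> sqrt (a^2+b^2) * sqrt (c^2+d^2)"
proof -
  have "0 \<le> (a*d-b*c)^2" by simp
  hence "(a*c+b*d)^2 \<le> (a^2+b^2)*(c^2+d^2)" by (simp add: power2_eq_square algebra_simps)
  hence "a*c+b*d \<le> sqrt ((a^2+b^2)*(c^2+d^2))" by (rule real_le_rsqrt)
  thus ?thesis by (simp add: real_sqrt_mult)
qed

lemma self_le_sqrt_sq: "(s::real) \<le> sqrt s * sqrt s"
  by (metis abs_ge_self real_sqrt_abs2 real_sqrt_mult)
theorem theorem2p15:
  fixes A B As Bs :: "'a::chilbert_space \<Rightarrow> 'a"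
  assumes "bounded_clinear A" and "bounded_clinear B"
    and "is_adjoint A As" and "is_adjoint B Bs"
  shows "numrad (\<lambda>x. A (B x) + B (A x))
           \<le> sqrt (numrad (\<lambda>x. As (A x) + A (As x))) * sqrt (numrad (\<lambda>x. Bs (B x) + B (Bs x))) \<and>
         numrad (\<lambda>x. A (B x) - B (A x))
           \<le> sqrt (numrad (\<lambda>x. As (A x) + A (As x))) * sqrt (numrad (\<lambda>x. Bs (B x) + B (Bs x))) \<and>
         numrad (\<lambda>x. A (B x) + B (A x))
           \<le> sqrt (numrad (\<lambda>x. As (A x) + Bs (B x))) * sqrt (numrad (\<lambda>x. A (As x) + B (Bs x))) \<and>
         numrad (\<lambda>x. A (B x) - B (A x))
           \<le> sqrt (numrad (\<lambda>x. As (A x) + Bs (B x))) * sqrt (numrad (\<lambda>x. A (As x) + B (Bs x)))"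
proof -
  have adjA: "\<And>u v. cinner (A u) v = cinner u (As v)" using assms(3) by (simp add: is_adjoint_def)
  have adjB: "\<And>u v. cinner (B u) v = cinner u (Bs v)" using assms(4) by (simp add: is_adjoint_def)
  have adjA': "\<And>u v. cinner (As u) v = cinner u (A v)"
    by (subst cinner_commute, simp add: adjA[symmetric] cinner_commute[of _ "A _"])
  have adjB': "\<And>u v. cinner (Bs u) v = cinner u (B v)"
    by (subst cinner_commute, simp add: adjB[symmetric] cinner_commute[of _ "B _"])
  have blA: "bounded_linear A" and blB: "bounded_linear B" using assms(1,2) by (auto simp: bounded_clinear_def)
  obtain KA where KA: "\<And>x. norm (A x) \<le> norm x * KA \<and> norm (As x) \<le> norm x * KA"
    using adj_bound[OF blA adjA] by blast
  obtain KB where KB: "\<And>x. norm (B x) \<le> norm x * KB \<and> norm (Bs x) \<le> norm x * KB"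
    using adj_bound[OF blB adjB] by blast
  have e1: "cmod (cinner (A (B x) + B (A x)) x) \<le> norm (B x) * norm (As x) + norm (A x) * norm (Bs x)" for x
  proof -
    have "cinner (A (B x) + B (A x)) x = cinner (B x) (As x) + cinner (A x) (Bs x)"
      by (simp add: cinner_add_left adjA adjB)
    also have "cmod \<dots> \<le> cmod (cinner (B x) (As x)) + cmod (cinner (A x) (Bs x))" by (rule norm_triangle_ineq)
    finally show ?thesis using cs[of "B x" "As x"] cs[of "A x" "Bs x"] by linarith
  qed
  have e2: "cmod (cinner (A (B x) - B (A x)) x) \<le> norm (B x) * norm (As x) + norm (A x) * norm (Bs x)" for x
  proof -
    have "cinner (A (B x) - B (A x)) x = cinner (B x) (As x) - cinner (A x) (Bs x)"
      by (simp add: cinner_diff_left adjA adjB)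
    also have "cmod \<dots> \<le> cmod (cinner (B x) (As x)) + cmod (cinner (A x) (Bs x))" by (rule norm_triangle_ineq4)
    finally show ?thesis using cs[of "B x" "As x"] cs[of "A x" "Bs x"] by linarith
  qed
  have q1: "cmod (cinner (As (A x) + A (As x)) x) = norm (A x)^2 + norm (As x)^2" for x
    by (simp add: cinner_add_left adjA adjA' cinner_self_norm flip: of_real_add of_real_power)
  have q2: "cmod (cinner (Bs (B x) + B (Bs x)) x) = norm (B x)^2 + norm (Bs x)^2" for x
    by (simp add: cinner_add_left adjB adjB' cinner_self_norm flip: of_real_add of_real_power)
  have q3: "cmod (cinner (As (A x) + Bs (B x)) x) = norm (A x)^2 + norm (B x)^2" for x
    by (simp add: cinner_add_left adjA' adjB' cinner_self_norm flip: of_real_add of_real_power)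
  have q4: "cmod (cinner (A (As x) + B (Bs x)) x) = norm (As x)^2 + norm (Bs x)^2" for x
    by (simp add: cinner_add_left adjA adjB cinner_self_norm flip: of_real_add of_real_power)
  show ?thesis
  proof (cases "\<exists>x::'a. norm x = 1")
    case False
    hence "\<And>T::'a\<Rightarrow>'a. numrad T = Sup {}" by (simp add: numrad_def)
    thus ?thesis using self_le_sqrt_sq by simp
  next
    case ex: True
    have bA: "norm (A x)^2 + norm (As x)^2 \<le> KA^2 + KA^2" if "norm x = 1" for x
      using KA[of x] that by (intro add_mono power_mono) auto
    have bB: "norm (B x)^2 + norm (Bs x)^2 \<le> KB^2 + KB^2" if "norm x = 1" for x
      using KB[of x] that by (intro add_mono power_mono) auto
    have bC: "norm (A x)^2 + norm (B x)^2 \<le> KA^2 + KB^2" if "norm x = 1" for x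
      using KA[of x] KB[of x] that by (intro add_mono power_mono) auto
    have bD: "norm (As x)^2 + norm (Bs x)^2 \<le> KA^2 + KB^2" if "norm x = 1" for x
      using KA[of x] KB[of x] that by (intro add_mono power_mono) auto
    have NA: "norm (A x)^2 + norm (As x)^2 \<le> numrad (\<lambda>x. As (A x) + A (As x))" if "norm x = 1" for x
      using numrad_upper[of "\<lambda>x. As (A x) + A (As x)" "KA^2 + KA^2" x] q1 bA that by simp
    have NB: "norm (B x)^2 + norm (Bs x)^2 \<le> numrad (\<lambda>x. Bs (B x) + B (Bs x))" if "norm x = 1" for x
      using numrad_upper[of "\<lambda>x. Bs (B x) + B (Bs x)" "KB^2 + KB^2" x] q2 bB that by simp
    have NC: "norm (A x)^2 + norm (B x)^2 \<le> numrad (\<lambda>x. As (A x) + Bs (B x))" if "norm x = 1" for x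
      using numrad_upper[of "\<lambda>x. As (A x) + Bs (B x)" "KA^2 + KB^2" x] q3 bC that by simp
    have ND: "norm (As x)^2 + norm (Bs x)^2 \<le> numrad (\<lambda>x. A (As x) + B (Bs x))" if "norm x = 1" for x
      using numrad_upper[of "\<lambda>x. A (As x) + B (Bs x)" "KA^2 + KB^2" x] q4 bD that by simp
    define R1 where "R1 = sqrt (numrad (\<lambda>x. As (A x) + A (As x))) * sqrt (numrad (\<lambda>x. Bs (B x) + B (Bs x)))"
    define R2 where "R2 = sqrt (numrad (\<lambda>x. As (A x) + Bs (B x))) * sqrt (numrad (\<lambda>x. A (As x) + B (Bs x)))"
    have s1: "norm (B x) * norm (As x) + norm (A x) * norm (Bs x) \<le> R1" if "norm x = 1" for x
    proof -
      have "norm (B x) * norm (As x) + norm (A x) * norm (Bs x) = norm (As x) * norm (B x) + norm (A x) * norm (Bs x)"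
        by simp
      also have "\<dots> \<le> sqrt (norm (As x)^2 + norm (A x)^2) * sqrt (norm (B x)^2 + norm (Bs x)^2)" by (rule cs2)
      also have "\<dots> \<le> R1" unfolding R1_def
      proof (intro mult_mono real_sqrt_le_mono)
        show "norm (As x)^2 + norm (A x)^2 \<le> numrad (\<lambda>x. As (A x) + A (As x))"
          using NA[OF that] by linarith
        show "norm (B x)^2 + norm (Bs x)^2 \<le> numrad (\<lambda>x. Bs (B x) + B (Bs x))"
          using NB[OF that] by linarith
        have "0 \<le> numrad (\<lambda>x. As (A x) + A (As x))"
          using NA[OF that] zero_le_power2[of "norm (A x)"] zero_le_power2[of "norm (As x)"] by linarith
        thus "0 \<le> sqrt (numrad (\<lambda>x. As (A x) + A (As x)))" by simp
      qed simp
      finally show ?thesis .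
    qed
    have s2: "norm (B x) * norm (As x) + norm (A x) * norm (Bs x) \<le> R2" if "norm x = 1" for x
    proof -
      have "norm (B x) * norm (As x) + norm (A x) * norm (Bs x) = norm (A x) * norm (Bs x) + norm (B x) * norm (As x)"
        by simp
      also have "\<dots> \<le> sqrt (norm (A x)^2 + norm (B x)^2) * sqrt (norm (Bs x)^2 + norm (As x)^2)" by (rule cs2)
      also have "\<dots> \<le> R2" unfolding R2_def
      proof (intro mult_mono real_sqrt_le_mono)
        show "norm (A x)^2 + norm (B x)^2 \<le> numrad (\<lambda>x. As (A x) + Bs (B x))"
          using NC[OF that] by linarith
        show "norm (Bs x)^2 + norm (As x)^2 \<le> numrad (\<lambda>x. A (As x) + B (Bs x))"
          using ND[OF that] by linarith
        have "0 \<le> numrad (\<lambda>x. As (A x) + Bs (B x))"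
          using NC[OF that] zero_le_power2[of "norm (A x)"] zero_le_power2[of "norm (B x)"] by linarith
        thus "0 \<le> sqrt (numrad (\<lambda>x. As (A x) + Bs (B x)))" by simp
      qed simp
      finally show ?thesis .
    qed
    have "numrad (\<lambda>x. A (B x) + B (A x)) \<le> R1"
      proof (rule numrad_least[OF _ ex], intro allI impI)
        fix x :: 'a assume h: "norm x = 1"
        show "cmod (cinner (A (B x) + B (A x)) x) \<le> R1" using e1[of x] s1[OF h] by linarith
      qed
    moreover have "numrad (\<lambda>x. A (B x) - B (A x)) \<le> R1"
      proof (rule numrad_least[OF _ ex], intro allI impI)
        fix x :: 'a assume h: "norm x = 1"
        show "cmod (cinner (A (B x) - B (A x)) x) \<le> R1" using e2[of x] s1[OF h] by linarith
      qed
    moreover have "numrad (\<lambda>x. A (B x) + B (A x)) \<le> R2"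
      proof (rule numrad_least[OF _ ex], intro allI impI)
        fix x :: 'a assume h: "norm x = 1"
        show "cmod (cinner (A (B x) + B (A x)) x) \<le> R2" using e1[of x] s2[OF h] by linarith
      qed
    moreover have "numrad (\<lambda>x. A (B x) - B (A x)) \<le> R2"
      proof (rule numrad_least[OF _ ex], intro allI impI)
        fix x :: 'a assume h: "norm x = 1"
        show "cmod (cinner (A (B x) - B (A x)) x) \<le> R2" using e2[of x] s2[OF h] by linarith
      qed
    ultimately show ?thesis unfolding R1_def R2_def by blast
  qed
qed

end
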